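(* Let $S=\{0,a,b\}\subseteq\mathbb{Z}$ with $a,b>0$, $a$ even and $b$ odd. Let $\chi$ be the alternating block 4-coloring of $\mathbb{Z}$ relative to $S$. Then every translate $n+S=\{n,n+a,n+b\}$, $n\in\mathbb{Z}$, contains elements of three different colors under $\chi$.
   Context: The alternating block 4-coloring relative to $S=\{0,a,b\}$ is defined as follows. For $m\in\mathbb{Z}$, let $q_m,r_m$ be the unique integers with $m=2aq_m+r_m$ and $-a\le r_m<a$. Let $X(m)=0$ if $r_m\ge0$ and $X(m)=1$ otherwise; let $Y(m)=0$ if $m$ is even and $Y(m)=1$ otherwise. Then $\chi(m)=(X(m),Y(m))$, a coloring with four colors. *)

theory Defs
  imports Main
begin

definition blk_rem :: "int \<Rightarrow> int \<Rightarrow> int" where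
  "blk_rem a m = (THE r. \<exists>q. m = 2 * a * q + r \<and> - a \<le> r \<and> r < a)"

definition colX :: "int \<Rightarrow> int \<Rightarrow> nat" where
  "colX a m = (if blk_rem a m \<ge> 0 then 0 else 1)"

definition colY :: "int \<Rightarrow> nat" where
  "colY m = (if even m then 0 else 1)"

text \<open>Alternating block 4-coloring relative to S = {0,a,b} (depends only on a).\<close>
definition alt_block_coloring :: "int \<Rightarrow> int \<Rightarrow> nat \<times> nat" where
  "alt_block_coloring a m = (colX a m, colY m)"

end

theory Submission
  imports Defs
begin

lemma blk_rem_eq:
  assumes "a > 0"
  shows "blk_rem a m = (m + a) mod (2*a) - a"
  unfolding blk_rem_def
proof (rule the_equality)
  show "\<exists>q. m = 2 * a * q + ((m + a) mod (2 * a) - a) \<and> - a \<le> (m + a) mod (2 * a) - a \<and> (m + a) mod (2 * a) - a < a"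
  proof (intro exI conjI)
    show "m = 2 * a * ((m+a) div (2*a)) + ((m + a) mod (2 * a) - a)"
      using div_mult_mod_eq[of "m+a" "2*a"] by (simp add: algebra_simps)
    show "- a \<le> (m + a) mod (2 * a) - a" using assms by simp
    show "(m + a) mod (2 * a) - a < a" using assms by simp
  qed
next
  fix r assume "\<exists>q. m = 2 * a * q + r \<and> - a \<le> r \<and> r < a"
  then obtain q where h: "m = 2*a*q + r" "-a \<le> r" "r < a" by blast
  have "(m + a) = (r + a) + q * (2*a)" using h by (simp add: algebra_simps)
  hence "(m+a) mod (2*a) = ((r+a) + q * (2*a)) mod (2*a)" by (simp only:)
  also have "\<dots> = (r+a) mod (2*a)" by (rule mod_mult_self1)
  also have "\<dots> = r + a" using h by (intro mod_pos_pos_trivial) auto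
  finally show "r = (m + a) mod (2 * a) - a" by simp
qed

lemma colX_diff:
  assumes "a > 0"
  shows "colX a (n + a) \<noteq> colX a n"
proof -
  define r where "r = (n + a) mod (2*a)"
  have r: "0 \<le> r" "r < 2*a" using assms by (auto simp: r_def)
  have "(n + a + a) mod (2*a) = (r + a) mod (2*a)"
    unfolding r_def by (metis mod_add_left_eq)
  moreover have "(r + a) mod (2*a) = (if r < a then r + a else r - a)"
  proof (cases "r < a")
    case True thus ?thesis using r by (simp add: mod_pos_pos_trivial)
  next
    case False
    have "(r + a) mod (2*a) = (r - a + 1 * (2*a)) mod (2*a)" by (simp add: algebra_simps)
    also have "\<dots> = (r - a) mod (2*a)" by (metis mod_mult_self1)
    also have "\<dots> = r - a" using r False by (intro mod_pos_pos_trivial) auto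
    finally show ?thesis using False by simp
  qed
  ultimately show ?thesis using assms r
    by (auto simp: colX_def blk_rem_eq r_def[symmetric] add.assoc split: if_splits)
qed

theorem mainTheorem20:
  fixes a b :: int
  assumes "a > 0" and "b > 0" and "even a" and "odd b"
  shows "\<forall>n::int. card (alt_block_coloring a ` {n, n + a, n + b}) = 3"
proof
  fix n
  have y1: "colY (n + a) = colY n" using assms(3) by (simp add: colY_def)
  have y2: "colY (n + b) \<noteq> colY n" using assms(4) by (simp add: colY_def)
  have x: "colX a (n + a) \<noteq> colX a n" using colX_diff assms(1) by blast
  have "alt_block_coloring a ` {n, n + a, n + b} =
        {alt_block_coloring a n, alt_block_coloring a (n+a), alt_block_coloring a (n+b)}" by simp
  moreover have "alt_block_coloring a n \<noteq> alt_block_coloring a (n+a)"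
    using x by (simp add: alt_block_coloring_def)
  moreover have "alt_block_coloring a n \<noteq> alt_block_coloring a (n+b)"
    using y2 by (simp add: alt_block_coloring_def)
  moreover have "alt_block_coloring a (n+a) \<noteq> alt_block_coloring a (n+b)"
    using y1 y2 by (simp add: alt_block_coloring_def)
  ultimately show "card (alt_block_coloring a ` {n, n + a, n + b}) = 3" by simp
qed

end
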